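(* Let $I$ be a nontrivial real interval, let $n\ge 2$ be an integer, and let $g\colon I^{(n)}\to I$ be a function. The following assertions are equivalent: (i) $g$ is $n$-associative (in the sense defined in the context); (ii) $g_1\circ g=g$, and $g(\mathbf{x}\,g(\mathbf{y})\,\mathbf{z})=g(\mathbf{x}'\,g(\mathbf{y}')\,\mathbf{z}')$ for all strings $\mathbf{x},\mathbf{y},\mathbf{z},\mathbf{x}',\mathbf{y}',\mathbf{z}'$ over $I$ such that $\mathbf{x}\mathbf{y}\mathbf{z},\mathbf{x}'\mathbf{y}'\mathbf{z}'\in I^{(n)}$, $\mathbf{y},\mathbf{y}'\in I^{(n)}$, and $\mathbf{x}\mathbf{y}\mathbf{z}=\mathbf{x}'\mathbf{y}'\mathbf{z}'$; (iii) $g(\mathbf{x}\,g(\mathbf{y})\,\mathbf{z})=g(\mathbf{x}\mathbf{y}\mathbf{z})$ for all strings $\mathbf{x},\mathbf{y},\mathbf{z}$ over $I$ such that $\mathbf{x}\mathbf{y}\mathbf{z}\in I^{(n)}$ and $\mathbf{y}\in I^{(n)}$; (iv) $g_1\circ g=g$, and $g(g(\mathbf{x}_1)\cdots g(\mathbf{x}_n))=g(\mathbf{x}_1\cdots\mathbf{x}_n)$ for all $\mathbf{x}_1,\dots,\mathbf{x}_n\in I^{(n)}$.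
   Context: Tuples in $I^m$ are regarded as strings of length $m$ over $I$; concatenation of strings is written by juxtaposition; $\varepsilon$ is the empty string and $I^0=\{\varepsilon\}$. Let $A_n=\{m\in\mathbb{N}: m\equiv 1 \pmod{n-1}\}$ and $I^{(n)}=\bigcup_{m\in A_n}I^m$. For $g\colon I^{(n)}\to I$, $g_m$ denotes the restriction of $g$ to $I^m$. A function $f\colon I^n\to I$ is associative if $f(\mathbf{x}\,f(\mathbf{y})\,\mathbf{z})=f(\mathbf{x}'\,f(\mathbf{y}')\,\mathbf{z}')$ whenever $\mathbf{x}\mathbf{y}\mathbf{z},\mathbf{x}'\mathbf{y}'\mathbf{z}'\in I^{2n-1}$, $\mathbf{y},\mathbf{y}'\in I^n$ and $\mathbf{x}\mathbf{y}\mathbf{z}=\mathbf{x}'\mathbf{y}'\mathbf{z}'$. A function $g\colon I^{(n)}\to I$ is called $n$-associative if (a) $g_n$ is associative; (b) for every $m\in A_n$ with $m>n$ and all $x_1,\dots,x_m\in I$, $g_m(x_1\cdots x_m)=g_n(g_n(\cdots g_n(g_n(x_1\cdots x_n)x_{n+1}\cdots x_{2n-1})\cdots)x_{m-n+2}\cdots x_m)$; and (c) $g_1\circ g=g$ and $g(\mathbf{x}\,g_1(y)\,\mathbf{z})=g(\mathbf{x}y\mathbf{z})$ for all strings $\mathbf{x},\mathbf{z}$ and $y\in I$ with $\mathbf{x}y\mathbf{z}\in I^{(n)}$. *)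

theory Defs
  imports "HOL-Analysis.Analysis"
begin

text \<open>Strings over I are real lists whose entries lie in I.
  Membership in I^(n) = union of I^m for m in A_n, with A_n = {m >= 1. m = 1 mod (n-1)}.\<close>

definition in_In :: "real set \<Rightarrow> nat \<Rightarrow> real list \<Rightarrow> bool" where
  "in_In I n xs \<longleftrightarrow> set xs \<subseteq> I \<and> 1 \<le> length xs \<and> length xs mod (n - 1) = 1 mod (n - 1)"

definition nontrivial_interval :: "real set \<Rightarrow> bool" where
  "nontrivial_interval I \<longleftrightarrow> is_interval I \<and> (\<exists>a\<in>I. \<exists>b\<in>I. a \<noteq> b)"

definition assoc_n :: "real set \<Rightarrow> nat \<Rightarrow> (real list \<Rightarrow> real) \<Rightarrow> bool" where
  "assoc_n I n g \<longleftrightarrow>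
     (\<forall>x y z x' y' z'. set (x @ y @ z) \<subseteq> I \<and> set (x' @ y' @ z') \<subseteq> I \<and>
        length (x @ y @ z) = 2 * n - 1 \<and> length y = n \<and> length y' = n \<and>
        x @ y @ z = x' @ y' @ z' \<longrightarrow>
        g (x @ [g y] @ z) = g (x' @ [g y'] @ z'))"

function nest :: "(real list \<Rightarrow> real) \<Rightarrow> nat \<Rightarrow> real list \<Rightarrow> real" where
  "nest g n xs = (if n \<le> 1 \<or> length xs \<le> n then g xs
                  else nest g n (g (take n xs) # drop n xs))"
  by pat_completeness auto
termination by (relation "Wellfounded.measure (\<lambda>(g, n, xs). length xs)") auto

definition n_associative :: "real set \<Rightarrow> nat \<Rightarrow> (real list \<Rightarrow> real) \<Rightarrow> bool" where
  "n_associative I n g \<longleftrightarrow>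
     assoc_n I n g \<and>
     (\<forall>xs. in_In I n xs \<and> length xs > n \<longrightarrow> g xs = nest g n xs) \<and>
     (\<forall>xs. in_In I n xs \<longrightarrow> g [g xs] = g xs) \<and>
     (\<forall>x y z. in_In I n (x @ [y] @ z) \<longrightarrow> g (x @ [g [y]] @ z) = g (x @ [y] @ z))"

end

theory Submission
  imports Defs
begin
declare nest.simps[simp del]

lemma len_n_In: "n \<ge> 2 \<Longrightarrow> set xs \<subseteq> I \<Longrightarrow> length xs = n \<Longrightarrow> in_In I n xs"
proof -
  assume a: "n \<ge> 2" "set xs \<subseteq> I" "length xs = n"
  have "n = 1 + (n-1)" using a by simp
  then have "n mod (n-1) = (1 + (n-1)) mod (n-1)" by simp
  also have "\<dots> = 1 mod (n-1)" by (rule mod_add_self2)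
  finally show ?thesis using a unfolding in_In_def by simp
qed

lemma in_In_shift:
  assumes "in_In I n (x@y@z)" "set y' \<subseteq> I"
    "length y = length y' + k*(n-1) \<or> length y' = length y + k*(n-1)"
    "length (x@y'@z) \<ge> 1"
  shows "in_In I n (x@y'@z)"
proof -
  have "length (x@y@z) mod (n-1) = length (x@y'@z) mod (n-1)"
  proof (cases "length y = length y' + k*(n-1)")
    case True
    then have "length (x@y@z) = length (x@y'@z) + k*(n-1)" by simp
    then show ?thesis by (simp only: mod_mult_self1)
  next
    case False
    then have "length (x@y'@z) = length (x@y@z) + k*(n-1)" using assms(3) by simp
    then show ?thesis by (simp only: mod_mult_self1)
  qed
  then show ?thesis using assms unfolding in_In_def by auto
qed

lemma len_cases: "n \<ge> 2 \<Longrightarrow> in_In I n xs \<Longrightarrow> length xs = 1 \<or> length xs \<ge> n"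
proof (rule ccontr)
  assume a: "n \<ge> 2" "in_In I n xs" "\<not> (length xs = 1 \<or> length xs \<ge> n)"
  then have l: "2 \<le> length xs" "length xs < n" unfolding in_In_def by auto
  show False
  proof (cases "n = 2")
    case True then show ?thesis using l by simp
  next
    case False
    then have "1 mod (n-1) = 1" using a by simp
    moreover have "length xs mod (n-1) = (if length xs = n - 1 then 0 else length xs)" using l by auto
    ultimately show False using a(2) l unfolding in_In_def by (auto split: if_splits)
  qed
qed
lemma step:
  assumes n2: "n \<ge> 2" and cl: "\<forall>xs. in_In I n xs \<longrightarrow> g xs \<in> I"
    and ne: "\<forall>xs. in_In I n xs \<and> length xs > n \<longrightarrow> g xs = nest g n xs"
    and w: "in_In I n w" "length w > n"
  shows "g w = g (g (take n w) # drop n w) \<and> in_In I n (g (take n w) # drop n w)"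
proof -
  have t: "in_In I n (take n w)" using w n2 
    by (intro len_n_In) (auto simp: in_In_def dest: in_set_takeD)
  have gI: "g (take n w) \<in> I" using cl t by blast
  define w' where "w' = g (take n w) # drop n w"
  have w'I: "in_In I n w'"
    using in_In_shift[of I n "[]" "take n w" "drop n w" "[g (take n w)]" 1] w gI n2
    by (simp add: w'_def)
  have "g w = nest g n w" using ne w by blast
  also have "\<dots> = nest g n w'" using w n2 by (subst nest.simps) (simp add: w'_def del: nest.simps)
  also have "\<dots> = g w'"
  proof (cases "length w' > n")
    case True then show ?thesis using ne w'I by metis
  next
    case False then show ?thesis by (subst nest.simps) simp
  qed
  finally show ?thesis using w'I by (simp add: w'_def)
qed
lemma star:
  assumes n2: "n \<ge> 2" and cl: "\<forall>xs. in_In I n xs \<longrightarrow> g xs \<in> I"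
    and ne: "\<forall>xs. in_In I n xs \<and> length xs > n \<longrightarrow> g xs = nest g n xs"
    and asc: "assoc_n I n g" and c1: "\<forall>xs. in_In I n xs \<longrightarrow> g [g xs] = g xs"
  shows "in_In I n w \<Longrightarrow> length w \<ge> n \<Longrightarrow> w = x@y@z \<Longrightarrow> length y = n \<Longrightarrow> g (x@[g y]@z) = g w"
proof (induction "length w" arbitrary: w x y z rule: less_induct)
  case less
  have wI: "set w \<subseteq> I" using less.prems unfolding in_In_def by auto
  have yI: "in_In I n y" using less.prems wI n2 by (intro len_n_In) auto
  have gy: "g y \<in> I" using cl yI by blast
  show ?case
  proof (cases "length w = n")
    case True
    then have "x = []" "z = []" using less.prems by auto
    then show ?thesis using c1 yI less.prems by simp
  next
    case False
    then have gt: "length w > n" using less.prems by simp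
    from step[OF n2 cl ne less.prems(1) gt]
    have sw: "g w = g (g (take n w) # drop n w)" and w'I: "in_In I n (g (take n w) # drop n w)" by auto
    show ?thesis
    proof (cases "x = []")
      case True
      then have "take n w = y" "drop n w = z" using less.prems by auto
      then show ?thesis using sw True by simp
    next
      case xne: False
      define s where "s = x@[g y]@z"
      have sI: "in_In I n s"
        using in_In_shift[of I n x y z "[g y]" 1] less.prems wI gy n2 by (auto simp: s_def)
      have ls: "length s = length w - (n-1)" using less.prems n2 by (simp add: s_def)
      have "length s \<ge> 2" using xne by (cases x) (auto simp: s_def)
      then have lsn: "length s \<ge> n" using len_cases[OF n2 sI] by auto
      show ?thesis
      proof (cases "length s = n")
        case True
        then have l2: "length w = 2*n-1" using ls gt by simp
        have "g (x@[g y]@z) = g ([]@[g (take n w)]@drop n w)"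
          by (rule asc[unfolded assoc_n_def, rule_format]) (use less.prems wI l2 gt in \<open>auto dest: in_set_takeD in_set_dropD\<close>)
        then show ?thesis using sw by simp
      next
        case False
        then have sgt: "length s > n" using lsn by simp
        from step[OF n2 cl ne sI sgt] have ss: "g s = g (g (take n s) # drop n s)" by simp
        show ?thesis
        proof (cases "length x \<ge> n")
          case True
          have t1: "take n s = take n w" "drop n s = drop n x @ [g y] @ z"
            using True less.prems by (auto simp: s_def)
          have dw: "drop n w = drop n x @ y @ z" using True less.prems by simp
          have "g ((g (take n w) # drop n x) @ [g y] @ z) = g (g (take n w) # drop n w)"
            apply (rule less.hyps)
            using w'I dw less.prems gt ls lsn n2 True by auto
          then show ?thesis using ss t1 sw by (simp add: s_def)
        next
          case False
          define k where "k = n - length x - 1"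
          define z1 where "z1 = take k z"
          define z2 where "z2 = drop k z"
          have lz: "length z \<ge> k" using sgt False by (simp add: s_def k_def)
          have kk: "n - length x = Suc k" using False by (simp add: k_def)
          have t1: "take n s = x@[g y]@z1" "drop n s = z2"
            using False lz less.prems kk by (auto simp: s_def z1_def z2_def)
          define u where "u = x@y@z1"
          have lu: "length u = 2*n-1" using False lz less.prems n2 by (simp add: u_def z1_def k_def)
          have wu: "w = u @ z2" using less.prems by (simp add: u_def z1_def z2_def)
          have tu: "take n u = take n w" using wu lu n2 by simp
          have du: "drop n w = drop n u @ z2" using wu lu n2 by simp
          have uI: "set u \<subseteq> I" using wI wu by auto
          have a1: "g (x@[g y]@z1) = g ([]@[g (take n u)]@drop n u)"
            by (rule asc[unfolded assoc_n_def, rule_format]) (use less.prems uI lu n2 in \<open>auto simp: u_def dest: in_set_takeD in_set_dropD\<close>)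
          define y' where "y' = g (take n w) # drop n u"
          have "g ([]@[g y']@z2) = g (g (take n w) # drop n w)"
            apply (rule less.hyps)
            using w'I du wu less.prems gt ls lsn n2 lu by (auto simp: y'_def)
          then show ?thesis using ss t1 sw a1 tu by (simp add: s_def y'_def)
        qed
      qed
    qed
  qed
qed
lemma in_In_len: "n \<ge> 2 \<Longrightarrow> in_In I n xs \<Longrightarrow> \<exists>k. length xs = 1 + k*(n-1)"
proof -
  assume a: "n \<ge> 2" "in_In I n xs"
  show ?thesis
  proof (cases "n = 2")
    case True then show ?thesis using a by (intro exI[of _ "length xs - 1"]) (auto simp: in_In_def)
  next
    case False
    then have "length xs mod (n-1) = 1" using a by (simp add: in_In_def)
    then have "length xs = 1 + (length xs div (n-1))*(n-1)" by (metis add.commute div_mult_mod_eq)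
    then show ?thesis by blast
  qed
qed

lemma in_In_single[simp]: "in_In I n [a] \<longleftrightarrow> a \<in> I"
  by (simp add: in_In_def)

lemma i_iii:
  assumes n2: "n \<ge> 2" and cl: "\<forall>xs. in_In I n xs \<longrightarrow> g xs \<in> I"
    and na: "n_associative I n g"
  shows "in_In I n (x@y@z) \<Longrightarrow> in_In I n y \<Longrightarrow> g (x@[g y]@z) = g (x@y@z)"
proof (induction "length y" arbitrary: x y z rule: less_induct)
  case less
  have ne: "\<forall>xs. in_In I n xs \<and> length xs > n \<longrightarrow> g xs = nest g n xs"
    and asc: "assoc_n I n g" and c1: "\<forall>xs. in_In I n xs \<longrightarrow> g [g xs] = g xs"
    and c2: "\<forall>x y z. in_In I n (x @ [y] @ z) \<longrightarrow> g (x @ [g [y]] @ z) = g (x @ [y] @ z)"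
    using na unfolding n_associative_def by auto
  note st = star[OF n2 cl ne asc c1]
  consider "length y = 1" | "length y = n" | "length y > n" using len_cases[OF n2 less.prems(2)] by linarith
  then show ?case
  proof cases
    case 1
    then obtain a where "y = [a]" by (cases y) auto
    then show ?thesis using c2 less.prems by auto
  next
    case 2
    then show ?thesis using st[of "x@y@z" x y z] less.prems by simp
  next
    case 3
    from step[OF n2 cl ne less.prems(2) 3]
    have sy: "g y = g (g (take n y) # drop n y)" and y'I: "in_In I n (g (take n y) # drop n y)" by auto
    have tI: "g (take n y) \<in> I" using y'I by (simp add: in_In_def)
    have ly: "length y = length (g (take n y) # drop n y) + 1*(n-1)" using 3 n2 by simp
    have sI: "set (g (take n y) # drop n y) \<subseteq> I" using y'I by (simp add: in_In_def)
    have xI: "in_In I n (x @ (g (take n y) # drop n y) @ z)"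
      by (rule in_In_shift[OF less.prems(1) sI, where k=1]) (use ly in auto)
    have lt: "length (g (take n y) # drop n y) < length y" using 3 n2 by simp
    have ih: "g (x @ [g (g (take n y) # drop n y)] @ z) = g (x @ (g (take n y) # drop n y) @ z)"
      by (rule less.hyps[OF lt xI y'I])
    have "g (x@[g y]@z) = g (x @ (g (take n y) # drop n y) @ z)"
      using ih sy by (simp only:)
    also have "\<dots> = g (x @ [g (take n y)] @ (drop n y @ z))" by simp
    also have "\<dots> = g (x@y@z)"
    proof -
      have e: "x@y@z = x @ take n y @ drop n y @ z" by (simp flip: append_assoc)
      show ?thesis by (rule st[OF less.prems(1) _ e]) (use 3 in auto)
    qed
    finally show ?thesis .
  qed
qed

lemma len_2n_In: "n \<ge> 2 \<Longrightarrow> set xs \<subseteq> I \<Longrightarrow> length xs = 2*n-1 \<Longrightarrow> in_In I n xs"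
proof -
  assume a: "n \<ge> 2" "set xs \<subseteq> I" "length xs = 2*n-1"
  have "2*n-1 = 1 + 2*(n-1)" using a by simp
  then have "(2*n-1) mod (n-1) = (1 + 2*(n-1)) mod (n-1)" by simp
  also have "\<dots> = 1 mod (n-1)" by (rule mod_mult_self1)
  finally show ?thesis using a unfolding in_In_def by simp
qed

lemma iii_i:
  assumes n2: "n \<ge> 2" and cl: "\<forall>xs. in_In I n xs \<longrightarrow> g xs \<in> I"
    and P3: "\<forall>x y z. in_In I n (x @ y @ z) \<and> in_In I n y \<longrightarrow> g (x @ [g y] @ z) = g (x @ y @ z)"
  shows "n_associative I n g"
proof -
  have A: "assoc_n I n g" unfolding assoc_n_def
  proof (intro allI impI)
    fix x y z x' y' z' :: "real list"
    assume h: "set (x @ y @ z) \<subseteq> I \<and> set (x' @ y' @ z') \<subseteq> I \<and>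
        length (x @ y @ z) = 2 * n - 1 \<and> length y = n \<and> length y' = n \<and> x @ y @ z = x' @ y' @ z'"
    have 1: "in_In I n (x@y@z)" by (rule len_2n_In[OF n2]) (use h in blast)+
    have 2: "in_In I n y" using h n2 by (intro len_n_In) auto
    have eq: "x@y@z = x'@y'@z'" using h by blast
    have le: "length (x'@y'@z') = 2*n-1" using h by (simp only: eq[symmetric])
    have 3: "in_In I n (x'@y'@z')" by (rule len_2n_In[OF n2]) (use h le in blast)+
    have 4: "in_In I n y'" using h n2 by (intro len_n_In) auto
    have "g (x @ [g y] @ z) = g (x@y@z)" using P3 1 2 by blast
    also have "\<dots> = g (x'@y'@z')" using eq by simp
    also have "\<dots> = g (x' @ [g y'] @ z')" by (rule P3[rule_format, OF conjI[OF 3 4], symmetric])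
    finally show "g (x @ [g y] @ z) = g (x' @ [g y'] @ z')" .
  qed
  have N: "in_In I n xs \<Longrightarrow> g xs = nest g n xs" for xs
  proof (induction "length xs" arbitrary: xs rule: less_induct)
    case less
    show ?case
    proof (cases "length xs \<le> n")
      case True then show ?thesis by (subst nest.simps) simp
    next
      case False
      have t: "in_In I n (take n xs)" using less.prems n2 False
        by (intro len_n_In) (auto simp: in_In_def dest: in_set_takeD)
      have gI: "g (take n xs) \<in> I" using cl t by blast
      have w'I: "in_In I n (g (take n xs) # drop n xs)"
        using in_In_shift[of I n "[]" "take n xs" "drop n xs" "[g (take n xs)]" 1] less.prems gI n2 False
        by simp
      have "nest g n xs = nest g n (g (take n xs) # drop n xs)"
        using False n2 by (subst nest.simps) (simp del: nest.simps)
      also have "\<dots> = g (g (take n xs) # drop n xs)"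
        using less.hyps[of "g (take n xs) # drop n xs"] w'I False n2 by simp
      also have "\<dots> = g xs" using P3[rule_format, of "[]" "take n xs" "drop n xs"] t less.prems by simp
      finally show ?thesis by simp
    qed
  qed
  have C1: "\<forall>xs. in_In I n xs \<longrightarrow> g [g xs] = g xs"
    using P3[rule_format, of "[]" _ "[]"] by simp
  have C2: "\<forall>x y z. in_In I n (x @ [y] @ z) \<longrightarrow> g (x @ [g [y]] @ z) = g (x @ [y] @ z)"
  proof (intro allI impI)
    fix x z :: "real list" and y :: real
    assume h: "in_In I n (x @ [y] @ z)"
    then have "y \<in> I" by (simp add: in_In_def)
    then show "g (x @ [g [y]] @ z) = g (x @ [y] @ z)" using P3[rule_format, of x "[y]" z] h by simp
  qed
  have N': "\<forall>xs. in_In I n xs \<and> length xs > n \<longrightarrow> g xs = nest g n xs" using N by blast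
  show ?thesis unfolding n_associative_def by (intro conjI A N' C1 C2)
qed
lemma in_In_iff: "n \<ge> 2 \<Longrightarrow> in_In I n xs \<longleftrightarrow> set xs \<subseteq> I \<and> (\<exists>k. length xs = 1 + k*(n-1))"
proof
  assume "n \<ge> 2" "in_In I n xs"
  then show "set xs \<subseteq> I \<and> (\<exists>k. length xs = 1 + k*(n-1))" using in_In_len[of n I xs] by (simp add: in_In_def)
next
  assume "set xs \<subseteq> I \<and> (\<exists>k. length xs = 1 + k*(n-1))"
  then obtain k where k: "set xs \<subseteq> I" "length xs = 1 + k*(n-1)" by blast
  have "(1 + k*(n-1)) mod (n-1) = 1 mod (n-1)" by (rule mod_mult_self1)
  then show "in_In I n xs" using k by (simp add: in_In_def)
qed

lemma concat_single[simp]: "concat (map (\<lambda>a. [a]) xs) = xs"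
  by (induction xs) auto

lemma iii_iv:
  assumes n2: "n \<ge> 2" and cl: "\<forall>xs. in_In I n xs \<longrightarrow> g xs \<in> I"
    and P3: "\<forall>x y z. in_In I n (x @ y @ z) \<and> in_In I n y \<longrightarrow> g (x @ [g y] @ z) = g (x @ y @ z)"
  shows "\<forall>xss. length xss = n \<and> (\<forall>xs\<in>set xss. in_In I n xs) \<longrightarrow> g (map g xss) = g (concat xss)"
proof -
  have gen: "(\<forall>xs\<in>set xss. in_In I n xs) \<Longrightarrow> in_In I n (ps @ map g xss) \<Longrightarrow>
     in_In I n (ps @ concat xss) \<and> g (ps @ map g xss) = g (ps @ concat xss)" for xss ps
  proof (induction xss arbitrary: ps)
    case Nil then show ?case by simp
  next
    case (Cons xs xss)
    have xsI: "in_In I n xs" using Cons.prems by simp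
    have h2: "in_In I n ((ps @ [g xs]) @ map g xss)" using Cons.prems(2) by simp
    from Cons.IH[OF _ h2] Cons.prems(1)
    have A: "in_In I n (ps @ [g xs] @ concat xss)"
      and B: "g (ps @ g xs # map g xss) = g (ps @ g xs # concat xss)" by auto
    obtain k where k: "length xs = 1 + k*(n-1)" using in_In_len[OF n2 xsI] by blast
    have sx: "set xs \<subseteq> I" using xsI by (simp add: in_In_def)
    have C: "in_In I n (ps @ xs @ concat xss)"
      by (rule in_In_shift[OF A sx, where k=k]) (use k in auto)
    have D: "g (ps @ [g xs] @ concat xss) = g (ps @ xs @ concat xss)"
      using P3 C xsI by blast
    show ?case using B C D by simp
  qed
  show ?thesis
  proof (intro allI impI)
    fix xss :: "real list list"
    assume h: "length xss = n \<and> (\<forall>xs\<in>set xss. in_In I n xs)"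
    have "in_In I n (map g xss)" using h cl n2 by (intro len_n_In) auto
    then show "g (map g xss) = g (concat xss)" using gen[of xss "[]"] h by simp
  qed
qed

lemma iv_iii:
  assumes n2: "n \<ge> 2" and cl: "\<forall>xs. in_In I n xs \<longrightarrow> g xs \<in> I"
    and c1: "\<forall>xs. in_In I n xs \<longrightarrow> g [g xs] = g xs"
    and tup: "\<forall>xss. length xss = n \<and> (\<forall>xs\<in>set xss. in_In I n xs) \<longrightarrow> g (map g xss) = g (concat xss)"
  shows "in_In I n (x@y@z) \<Longrightarrow> in_In I n y \<Longrightarrow> g (x@[g y]@z) = g (x@y@z)"
proof (induction "length x + length z" arbitrary: x z rule: less_induct)
  case less
  have gy: "g y \<in> I" using cl less.prems by blast
  obtain ky where ky: "length y = 1 + ky*(n-1)" using in_In_len[OF n2 less.prems(2)] by blast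
  have xyzI: "set x \<subseteq> I" "set y \<subseteq> I" "set z \<subseteq> I" using less.prems(1) by (auto simp: in_In_def)
  define s where "s = x@[g y]@z"
  have sI: "in_In I n s" unfolding s_def
    by (rule in_In_shift[OF less.prems(1), where k=ky]) (use ky gy in auto)
  obtain js where js: "length s = 1 + js*(n-1)" using in_In_len[OF n2 sI] by blast
  show ?case
  proof (cases js)
    case 0
    then have "x = []" "z = []" using js by (auto simp: s_def)
    then show ?thesis using c1 less.prems by simp
  next
    case (Suc j)
    define m where "m = 1 + j*(n-1)"
    have ls: "length s = m + (n-1)" using js Suc by (simp add: m_def)
    have mI: "\<And>xs. set xs \<subseteq> I \<Longrightarrow> length xs = m \<Longrightarrow> in_In I n xs"
      using n2 by (auto simp: in_In_iff m_def)
    have n1: "n - 1 \<ge> 1" using n2 by simp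
    show ?thesis
    proof (cases "length x < m")
      case True
      define k where "k = m - length x - 1"
      define z1 where "z1 = take k z"
      define z2 where "z2 = drop k z"
      have lz: "length z = k + (n-1)" using ls True by (simp add: s_def k_def)
      have lz2: "length z2 = n-1" using lz by (simp add: z2_def)
      have zz: "z = z1 @ z2" by (simp add: z1_def z2_def)
      have l1: "length (x@[g y]@z1) = m" using True lz by (simp add: z1_def k_def)
      have z1I: "set z1 \<subseteq> I" "set z2 \<subseteq> I" using xyzI zz by auto
      have b1: "in_In I n (x@[g y]@z1)" using mI l1 z1I xyzI gy by simp
      have b2: "in_In I n (x@y@z1)"
        by (rule in_In_shift[OF b1 xyzI(2), where k=ky]) (use ky in auto)
      have ih: "g (x@[g y]@z1) = g (x@y@z1)"
        by (rule less.hyps[OF _ b2 less.prems(2)]) (use lz2 zz n1 in auto)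
      have t1: "g (map g ((x@[g y]@z1) # map (\<lambda>a. [a]) z2)) = g (concat ((x@[g y]@z1) # map (\<lambda>a. [a]) z2))"
        by (rule tup[rule_format, OF conjI]) (use lz2 b1 z1I n2 in auto)+
      have t2: "g (map g ((x@y@z1) # map (\<lambda>a. [a]) z2)) = g (concat ((x@y@z1) # map (\<lambda>a. [a]) z2))"
        by (rule tup[rule_format, OF conjI]) (use lz2 b2 z1I n2 in auto)+
      have "g (x@[g y]@z) = g (g (x@[g y]@z1) # map (\<lambda>a. g [a]) z2)" using t1 zz by (simp add: comp_def)
      also have "\<dots> = g (g (x@y@z1) # map (\<lambda>a. g [a]) z2)" using ih by simp
      also have "\<dots> = g (x@y@z)" using t2 zz by (simp add: comp_def)
      finally show ?thesis .
    next
      case False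
      define x1 where "x1 = take m x"
      define x2 where "x2 = drop m x"
      have xx: "x = x1 @ x2" by (simp add: x1_def x2_def)
      have l1: "length x1 = m" using False by (simp add: x1_def)
      have lrest: "length x2 + length z = n - 2" using ls False n2 by (simp add: s_def x2_def)
      have x1I: "set x1 \<subseteq> I" "set x2 \<subseteq> I" using xyzI xx by auto
      have b1: "in_In I n x1" using mI l1 x1I by simp
      have t1: "g (map g (x1 # map (\<lambda>a. [a]) x2 @ [y] @ map (\<lambda>a. [a]) z)) = g (concat (x1 # map (\<lambda>a. [a]) x2 @ [y] @ map (\<lambda>a. [a]) z))"
        by (rule tup[rule_format, OF conjI]) (use lrest b1 x1I xyzI less.prems(2) n2 in auto)+
      have t2: "g (map g (x1 # map (\<lambda>a. [a]) x2 @ [[g y]] @ map (\<lambda>a. [a]) z)) = g (concat (x1 # map (\<lambda>a. [a]) x2 @ [[g y]] @ map (\<lambda>a. [a]) z))"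
        by (rule tup[rule_format, OF conjI]) (use lrest b1 x1I xyzI gy n2 in auto)+
      have "g (x@[g y]@z) = g (g x1 # map (\<lambda>a. g [a]) x2 @ [g [g y]] @ map (\<lambda>a. g [a]) z)"
        using t2 xx by (simp add: comp_def)
      also have "\<dots> = g (g x1 # map (\<lambda>a. g [a]) x2 @ [g y] @ map (\<lambda>a. g [a]) z)"
        using c1 less.prems(2) by simp
      also have "\<dots> = g (x@y@z)" using t1 xx by (simp add: comp_def)
      finally show ?thesis .
    qed
  qed
qed
theorem proposition2p5:
  fixes I :: "real set" and n :: nat and g :: "real list \<Rightarrow> real"
  assumes "nontrivial_interval I"
    and "n \<ge> 2"
    and "\<forall>xs. in_In I n xs \<longrightarrow> g xs \<in> I"
  shows
   "(n_associative I n g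
     \<longleftrightarrow> ((\<forall>xs. in_In I n xs \<longrightarrow> g [g xs] = g xs) \<and>
          (\<forall>x y z x' y' z'. in_In I n (x @ y @ z) \<and> in_In I n (x' @ y' @ z') \<and>
              in_In I n y \<and> in_In I n y' \<and> x @ y @ z = x' @ y' @ z' \<longrightarrow>
              g (x @ [g y] @ z) = g (x' @ [g y'] @ z')))) \<and>
    (n_associative I n g
     \<longleftrightarrow> (\<forall>x y z. in_In I n (x @ y @ z) \<and> in_In I n y \<longrightarrow>
              g (x @ [g y] @ z) = g (x @ y @ z))) \<and>
    (n_associative I n g
     \<longleftrightarrow> ((\<forall>xs. in_In I n xs \<longrightarrow> g [g xs] = g xs) \<and>
          (\<forall>xss. length xss = n \<and> (\<forall>xs\<in>set xss. in_In I n xs) \<longrightarrow>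
              g (map g xss) = g (concat xss))))"
proof -
  note n2 = assms(2) and cl = assms(3)
  define A where "A = n_associative I n g"
  define C where "C = (\<forall>x y z. in_In I n (x @ y @ z) \<and> in_In I n y \<longrightarrow>
              g (x @ [g y] @ z) = g (x @ y @ z))"
  define B where "B = ((\<forall>xs. in_In I n xs \<longrightarrow> g [g xs] = g xs) \<and>
          (\<forall>x y z x' y' z'. in_In I n (x @ y @ z) \<and> in_In I n (x' @ y' @ z') \<and>
              in_In I n y \<and> in_In I n y' \<and> x @ y @ z = x' @ y' @ z' \<longrightarrow>
              g (x @ [g y] @ z) = g (x' @ [g y'] @ z')))"
  define D where "D = ((\<forall>xs. in_In I n xs \<longrightarrow> g [g xs] = g xs) \<and>
          (\<forall>xss. length xss = n \<and> (\<forall>xs\<in>set xss. in_In I n xs) \<longrightarrow>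
              g (map g xss) = g (concat xss)))"
  have AC: "A \<longleftrightarrow> C"
  proof
    assume A
    then show C unfolding C_def A_def using i_iii[OF n2 cl] by blast
  next
    assume C
    then show A unfolding C_def A_def using iii_i[OF n2 cl] by blast
  qed
  have BC: "B \<longleftrightarrow> C"
  proof
    assume b: B
    show C unfolding C_def
    proof (intro allI impI)
      fix x y z :: "real list"
      assume h: "in_In I n (x @ y @ z) \<and> in_In I n y"
      have e1: "g (x @ [g y] @ z) = g ([] @ [g (x@y@z)] @ [])"
        using b h unfolding B_def by (metis append.right_neutral append_Nil)
      also have "\<dots> = g (x@y@z)" using b h unfolding B_def by simp
      finally show "g (x @ [g y] @ z) = g (x @ y @ z)" .
    qed
  next
    assume c: C
    have c1: "\<forall>xs. in_In I n xs \<longrightarrow> g [g xs] = g xs"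
      using c unfolding C_def by (metis append.right_neutral append_Nil)
    have c2: "\<forall>x y z x' y' z'. in_In I n (x @ y @ z) \<and> in_In I n (x' @ y' @ z') \<and>
              in_In I n y \<and> in_In I n y' \<and> x @ y @ z = x' @ y' @ z' \<longrightarrow>
              g (x @ [g y] @ z) = g (x' @ [g y'] @ z')"
    proof (intro allI impI)
      fix x y z x' y' z' :: "real list"
      assume h: "in_In I n (x @ y @ z) \<and> in_In I n (x' @ y' @ z') \<and>
              in_In I n y \<and> in_In I n y' \<and> x @ y @ z = x' @ y' @ z'"
      have "g (x @ [g y] @ z) = g (x@y@z)" using c h unfolding C_def by blast
      also have "\<dots> = g (x'@y'@z')" using h by simp
      also have "\<dots> = g (x' @ [g y'] @ z')" using c h unfolding C_def by (metis (no_types, lifting))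
      finally show "g (x @ [g y] @ z) = g (x' @ [g y'] @ z')" .
    qed
    show B unfolding B_def using c1 c2 by blast
  qed
  have DC: "D \<longleftrightarrow> C"
  proof
    assume d: D
    show C unfolding C_def using iv_iii[OF n2 cl] d unfolding D_def by blast
  next
    assume c: C
    have c1: "\<forall>xs. in_In I n xs \<longrightarrow> g [g xs] = g xs"
      using c unfolding C_def by (metis append.right_neutral append_Nil)
    show D unfolding D_def using c1 iii_iv[OF n2 cl] c unfolding C_def by blast
  qed
  show ?thesis using AC BC DC unfolding A_def B_def C_def D_def by blast
qed

end
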